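(* Let $q(n)$ denote the number of partitions of $n$ into distinct parts, with $q(0)=1$ and $q(n)=0$ for $n<0$, and define $s(n)=q(n)-2q(n-1)+q(n-2)$ for $n\ge 0$. Then for every integer $n\ge 6$, $s(n)$ equals the number of partitions of $n$ into distinct parts $p_1>p_2>\dots>p_k$ with $k\ge 3$ such that $$p_1=p_2+1=p_3+2>p_4>\dots>p_k>1,$$ i.e. strict partitions of $n$ with at least three parts, the three largest parts consecutive integers, and the smallest part at least $2$.
   Context: $s(n)$ is the second difference of the sequence $q(n)$ of numbers of strict partitions (partitions into distinct parts). *)

theory Defs
  imports Main
begin

definition strict_partitions :: "nat \<Rightarrow> nat set set" where
  "strict_partitions n = {A. finite A \<and> 0 \<notin> A \<and> \<Sum>A = n}"

definition q :: "int \<Rightarrow> int" where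
  "q n = (if n < 0 then 0 else int (card (strict_partitions (nat n))))"

definition s :: "int \<Rightarrow> int" where
  "s n = q n - 2 * q (n - 1) + q (n - 2)"

definition special_partitions :: "nat \<Rightarrow> nat set set" where
  "special_partitions n = {A \<in> strict_partitions n. card A \<ge> 3 \<and>
      Max A - 1 \<in> A \<and> Max A - 2 \<in> A \<and> (\<forall>x\<in>A. x \<ge> 2)}"

end

theory Submission
  imports Defs
begin

abbreviation SP where "SP \<equiv> strict_partitions"

definition E :: "nat \<Rightarrow> nat set set" where
  "E n = {A \<in> SP n. Max A - 1 \<in> A}"

lemma SP_iff: "A \<in> SP n \<longleftrightarrow> finite A \<and> 0 \<notin> A \<and> \<Sum>A = n"
  by (simp add: strict_partitions_def)

lemma fin_SP: "finite (SP n)"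
proof -
  have "SP n \<subseteq> Pow {..n}"
  proof
    fix A assume "A \<in> SP n"
    then have f: "finite A" and s: "\<Sum>A = n" by (auto simp: SP_iff)
    have "x \<le> n" if "x \<in> A" for x
      using member_le_sum[of x A "\<lambda>x. x"] f s that by auto
    then show "A \<in> Pow {..n}" by auto
  qed
  then show ?thesis by (rule finite_subset) auto
qed

lemma fin_E: "finite (E n)"
  using fin_SP by (rule finite_subset[rotated]) (auto simp: E_def)

lemma sum_le_sub: "finite S \<Longrightarrow> (B::nat set) \<subseteq> S \<Longrightarrow> \<Sum>B \<le> \<Sum>S"
  by (rule sum_mono2) auto

lemma sum_pos_ne: "\<Sum>(A::nat set) \<ge> 1 \<Longrightarrow> A \<noteq> {}"
  by auto

lemma max_le: "finite (A::nat set) \<Longrightarrow> x \<in> A \<Longrightarrow> x \<le> Max A"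
  by simp

lemma sum_rem: "finite (A::nat set) \<Longrightarrow> a \<in> A \<Longrightarrow> \<Sum>A = a + \<Sum>(A - {a})"
  by (simp add: sum.remove)

lemma sum_ins: "finite (A::nat set) \<Longrightarrow> a \<notin> A \<Longrightarrow> \<Sum>(insert a A) = a + \<Sum>A"
  by simp

lemma bijW: "\<forall>a\<in>A. g (f a) = a \<and> f a \<in> A' \<Longrightarrow> \<forall>b\<in>A'. f (g b) = b \<and> g b \<in> A \<Longrightarrow> bij_betw f A A'"
  by (rule bij_betw_byWitness[where f'=g]) auto

lemma step1:
  assumes "n \<ge> 2"
  shows "card (SP n) = card (SP (n-1)) + card (E n)"
proof -
  define f where "f = (\<lambda>A::nat set. insert (Max A + 1) (A - {Max A}))"
  define g where "g = (\<lambda>B::nat set. insert (Max B - 1) (B - {Max B}))"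
  have bij: "bij_betw f (SP (n-1)) (SP n - E n)"
  proof (rule bijW[where g=g])
    show "\<forall>a\<in>SP (n-1). g (f a) = a \<and> f a \<in> SP n - E n"
    proof
      fix A assume A: "A \<in> SP (n-1)"
      then have fin: "finite A" and z: "0 \<notin> A" and sA: "\<Sum>A = n-1" by (auto simp: SP_iff)
      have ne: "A \<noteq> {}" using sA assms by auto
      define m where "m = Max A"
      have mA: "m \<in> A" using fin ne m_def by simp
      have le: "\<forall>x\<in>A. x \<le> m" using fin m_def by simp
      have nm: "m+1 \<notin> A - {m}" using le by force
      have fA: "f A = insert (m+1) (A - {m})" by (simp add: f_def m_def)
      have Mf: "Max (f A) = m+1" unfolding fA
        by (rule Max_eqI) (use fin le in auto)
      have s1: "\<Sum>(f A) = n" unfolding fA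
        using sum_ins[of "A - {m}" "m+1"] sum_rem[OF fin mA] nm fin sA assms by simp
      have "f A \<in> SP n" using s1 fin z by (auto simp: SP_iff fA)
      moreover have "f A \<notin> E n" using Mf by (auto simp: E_def fA)
      moreover have "g (f A) = A" using Mf nm mA unfolding g_def fA by auto
      ultimately show "g (f A) = A \<and> f A \<in> SP n - E n" by auto
    qed
    show "\<forall>b\<in>SP n - E n. f (g b) = b \<and> g b \<in> SP (n-1)"
    proof
      fix B assume B: "B \<in> SP n - E n"
      then have fin: "finite B" and z: "0 \<notin> B" and sB: "\<Sum>B = n" and nE: "Max B - 1 \<notin> B"
        by (auto simp: SP_iff E_def)
      have ne: "B \<noteq> {}" using sB assms by auto
      define M where "M = Max B"
      have MB: "M \<in> B" using fin ne M_def by simp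
      have le: "\<forall>x\<in>B. x \<le> M" using fin M_def by simp
      have M2: "M \<ge> 2"
      proof (rule ccontr)
        assume "\<not> M \<ge> 2"
        have "B \<subseteq> {1}"
        proof
          fix x assume "x \<in> B"
          then have "x \<le> M" "x \<noteq> 0" using le z by (blast, metis)
          then show "x \<in> {1}" using \<open>\<not> M \<ge> 2\<close> by simp
        qed
        then have "\<Sum>B \<le> \<Sum>{1::nat}" by (intro sum_le_sub) auto
        then show False using sB assms by simp
      qed
      have nM1: "M - 1 \<notin> B" using nE M_def by simp
      have gB: "g B = insert (M-1) (B - {M})" by (simp add: g_def M_def)
      have le2: "\<forall>x\<in>B - {M}. x \<le> M - 1" using le by force
      have Mg: "Max (g B) = M-1" unfolding gB
        by (rule Max_eqI) (use fin le2 in auto)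
      have s1: "\<Sum>(g B) = n - 1" unfolding gB
        using sum_ins[of "B - {M}" "M-1"] sum_rem[OF fin MB] nM1 fin sB M2 by simp
      have "g B \<in> SP (n-1)" using s1 fin z M2 by (auto simp: SP_iff gB)
      moreover have "f (g B) = B" unfolding f_def Mg using M2 MB nM1 gB
        by auto
      ultimately show "f (g B) = B \<and> g B \<in> SP (n-1)" by auto
    qed
  qed
  have "card (SP n) = card (E n) + card (SP n - E n)"
    using fin_SP[of n] by (subst card_Un_disjoint[symmetric]) (auto simp: E_def intro: arg_cong[where f=card])
  also have "card (SP n - E n) = card (SP (n-1))" using bij_betw_same_card[OF bij] by simp
  finally show ?thesis by simp
qed

lemma spec_eq: "special_partitions n = {A \<in> E n. 1 \<notin> A \<and> Max A - 2 \<in> A}"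
proof (rule set_eqI, rule iffI)
  fix A assume "A \<in> special_partitions n"
  then show "A \<in> {A \<in> E n. 1 \<notin> A \<and> Max A - 2 \<in> A}"
    unfolding special_partitions_def E_def by force
next
  fix A assume A: "A \<in> {A \<in> E n. 1 \<notin> A \<and> Max A - 2 \<in> A}"
  then have fin: "finite A" and z: "0 \<notin> A" and o: "1 \<notin> A" and a1: "Max A - 1 \<in> A"
    and a2: "Max A - 2 \<in> A" and sp: "A \<in> SP n"
    by (auto simp: E_def SP_iff)
  have ne: "A \<noteq> {}" using a1 by auto
  have mA: "Max A \<in> A" using fin ne by simp
  have "Max A - 2 \<noteq> 0" "Max A - 2 \<noteq> 1" using a2 z o by (metis, metis)
  then have m4: "Max A \<ge> 4" by linarith
  have "{Max A, Max A - 1, Max A - 2} \<subseteq> A" using mA a1 a2 by auto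
  then have "card {Max A, Max A - 1, Max A - 2} \<le> card A" using fin by (rule card_mono[rotated])
  moreover have "card {Max A, Max A - 1, Max A - 2} = 3" using m4 by (auto simp: card_insert_if)
  ultimately have "card A \<ge> 3" by simp
  moreover have "\<forall>x\<in>A. x \<ge> 2"
  proof
    fix x assume "x \<in> A"
    then have "x \<noteq> 0" "x \<noteq> 1" using z o by (metis, metis)
    then show "x \<ge> 2" by linarith
  qed
  ultimately show "A \<in> special_partitions n"
    using sp a1 a2 unfolding special_partitions_def by simp
qed

lemma small_sum:
  assumes fin: "finite (B::nat set)" and le: "\<forall>x\<in>B. x \<le> k" and z: "0 \<notin> B"
  shows "\<Sum>B \<le> \<Sum>{1..k}"
proof -
  have "B \<subseteq> {1..k}"
  proof
    fix x assume "x \<in> B"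
    then have "x \<le> k" "x \<noteq> 0" using le z by (blast, metis)
    then show "x \<in> {1..k}" by simp
  qed
  then show ?thesis by (intro sum_le_sub) auto
qed

lemma small_sum2:
  assumes fin: "finite (B::nat set)" and le: "\<forall>x\<in>B. x \<le> 3" and z: "0 \<notin> B" and o: "1 \<notin> B"
  shows "\<Sum>B \<le> 5"
proof -
  have "B \<subseteq> {2,3}"
  proof
    fix x assume "x \<in> B"
    then have "x \<le> 3" "x \<noteq> 0" "x \<noteq> 1" using le z o by (blast, metis, metis)
    then show "x \<in> {2,3}" by auto
  qed
  then have "\<Sum>B \<le> \<Sum>{2,3::nat}" by (intro sum_le_sub) auto
  then show ?thesis by simp
qed

lemma step2:
  assumes n6: "n \<ge> 6"
  shows "card (E n) = card (E (n-1)) + card (special_partitions n)"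
proof -
  define P where "P = {A \<in> E (n-1). 1 \<notin> A}"
  define Q where "Q = {A \<in> E (n-1). 1 \<in> A}"
  define E1 where "E1 = {A \<in> E n. 1 \<in> A}"
  define E2 where "E2 = {A \<in> E n. 1 \<notin> A \<and> Max A - 2 \<notin> A}"
  define h where "h = (\<lambda>A::nat set. insert (Max A + 1) (A - {1, Max A - 1}))"
  define k where "k = (\<lambda>B::nat set. insert 1 (insert (Max B - 2) (B - {Max B})))"
  have b1: "bij_betw (insert 1) P E1"
  proof (rule bijW[where g="\<lambda>B. B - {1}"])
    show "\<forall>a\<in>P. insert 1 a - {1} = a \<and> insert 1 a \<in> E1"
    proof
      fix A assume "A \<in> P"
      then have fin: "finite A" and z: "0 \<notin> A" and sA: "\<Sum>A = n-1" and o: "1 \<notin> A"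
        and a1: "Max A - 1 \<in> A"
        by (auto simp: P_def E_def SP_iff)
      have ne: "A \<noteq> {}" using sA n6 by auto
      have mA: "Max A \<in> A" using fin ne by simp
      have m1: "Max A \<ge> 1" using mA z by (cases "Max A") auto
      have Mx: "Max (insert 1 A) = Max A" using fin ne m1 by simp
      have "\<Sum>(insert 1 A) = n" using fin o sA n6 by simp
      then show "insert 1 A - {1} = A \<and> insert 1 A \<in> E1"
        using o fin z a1 Mx by (auto simp: E1_def E_def SP_iff)
    qed
    show "\<forall>b\<in>E1. insert 1 (b - {1}) = b \<and> b - {1} \<in> P"
    proof
      fix B assume "B \<in> E1"
      then have fin: "finite B" and z: "0 \<notin> B" and sB: "\<Sum>B = n" and o: "1 \<in> B"
        and a1: "Max B - 1 \<in> B"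
        by (auto simp: E1_def E_def SP_iff)
      have ne: "B \<noteq> {}" using o by auto
      have mB: "Max B \<in> B" using fin ne by simp
      have le: "\<forall>x\<in>B. x \<le> Max B" using fin by simp
      have m3: "Max B \<ge> 3"
      proof (rule ccontr)
        assume "\<not> Max B \<ge> 3"
        then have "\<forall>x\<in>B. x \<le> 2" using le by force
        then have "\<Sum>B \<le> \<Sum>{1..2::nat}" using small_sum fin z by blast
        then show False using sB n6 by (simp add: numeral_eq_Suc)
      qed
      have Mx: "Max (B - {1}) = Max B"
        by (rule Max_eqI) (use fin mB m3 le in auto)
      have "\<Sum>(B - {1}) = n - 1" using sum_rem[OF fin o] sB by simp
      then show "insert 1 (B - {1}) = B \<and> B - {1} \<in> P"
        using o fin z a1 Mx m3 by (auto simp: P_def E_def SP_iff)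
    qed
  qed
  have b2: "bij_betw h Q E2"
  proof (rule bijW[where g=k])
    show "\<forall>a\<in>Q. k (h a) = a \<and> h a \<in> E2"
    proof
      fix A assume "A \<in> Q"
      then have fin: "finite A" and z: "0 \<notin> A" and sA: "\<Sum>A = n-1" and o: "1 \<in> A"
        and a1: "Max A - 1 \<in> A"
        by (auto simp: Q_def E_def SP_iff)
      have ne: "A \<noteq> {}" using o by auto
      define m where "m = Max A"
      have mA: "m \<in> A" using fin ne m_def by simp
      have le: "\<forall>x\<in>A. x \<le> m" using fin m_def by simp
      have m3: "m \<ge> 3"
      proof (rule ccontr)
        assume "\<not> m \<ge> 3"
        then have "\<forall>x\<in>A. x \<le> 2" using le by force
        then have "\<Sum>A \<le> \<Sum>{1..2::nat}" using small_sum fin z by blast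
        then show False using sA n6 by (simp add: numeral_eq_Suc)
      qed
      have a1': "m - 1 \<in> A" using a1 m_def by simp
      have hA: "h A = insert (m+1) (A - {1, m - 1})" by (simp add: h_def m_def)
      have nm: "m + 1 \<notin> A" using le by force
      have Mh: "Max (h A) = m + 1" unfolding hA
        by (rule Max_eqI) (use fin le in auto)
      have "\<Sum>A = 1 + \<Sum>(A - {1})" using sum_rem[OF fin o] .
      moreover have "\<Sum>(A - {1}) = (m-1) + \<Sum>(A - {1} - {m-1})"
        using sum_rem[of "A - {1}" "m-1"] fin a1' m3 by simp
      moreover have "\<Sum>(h A) = (m+1) + \<Sum>(A - {1} - {m-1})"
      proof -
        have "h A = insert (m+1) (A - {1} - {m-1})" unfolding hA by auto
        then show ?thesis using fin nm by simp
      qed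
      ultimately have sh: "\<Sum>(h A) = n" using sA m3 n6 by simp
      have "h A \<in> E2"
        unfolding E2_def E_def using sh fin z m3 Mh mA unfolding hA by (auto simp: SP_iff)
      moreover have "k (h A) = A"
      proof -
        have "k (h A) = insert 1 (insert (m - 1) (h A - {m+1}))" unfolding k_def Mh by simp
        also have "h A - {m+1} = A - {1, m-1}" unfolding hA using nm by auto
        finally show ?thesis using o a1' by auto
      qed
      ultimately show "k (h A) = A \<and> h A \<in> E2" by simp
    qed
    show "\<forall>b\<in>E2. h (k b) = b \<and> k b \<in> Q"
    proof
      fix B assume "B \<in> E2"
      then have fin: "finite B" and z: "0 \<notin> B" and sB: "\<Sum>B = n" and o: "1 \<notin> B"
        and a1: "Max B - 1 \<in> B" and a2: "Max B - 2 \<notin> B"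
        by (auto simp: E2_def E_def SP_iff)
      have ne: "B \<noteq> {}" using a1 by auto
      define M where "M = Max B"
      have mB: "M \<in> B" using fin ne M_def by simp
      have le: "\<forall>x\<in>B. x \<le> M" using fin M_def by simp
      have m4: "M \<ge> 4"
      proof (rule ccontr)
        assume "\<not> M \<ge> 4"
        then have "\<forall>x\<in>B. x \<le> 3" using le by force
        then have "\<Sum>B \<le> 5" using small_sum2 fin z o by blast
        then show False using sB n6 by simp
      qed
      have a1': "M - 1 \<in> B" and a2': "M - 2 \<notin> B" using a1 a2 M_def by auto
      have kB: "k B = insert 1 (insert (M - 2) (B - {M}))" by (simp add: k_def M_def)
      have le2: "\<forall>x\<in>B - {M}. x \<le> M - 1" using le by force
      have Mk: "Max (k B) = M - 1" unfolding kB
        by (rule Max_eqI) (use fin le2 a1' m4 in auto)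
      have "\<Sum>B = M + \<Sum>(B - {M})" using sum_rem[OF fin mB] .
      moreover have "\<Sum>(k B) = 1 + (M - 2) + \<Sum>(B - {M})"
        unfolding kB using fin o a2' m4 by simp
      ultimately have sk: "\<Sum>(k B) = n - 1" using sB m4 by simp
      have "k B \<in> Q"
        unfolding Q_def E_def using sk fin z m4 Mk a1' unfolding kB by (auto simp: SP_iff)
      moreover have "h (k B) = B"
      proof -
        have "h (k B) = insert M (k B - {1, M - 2})" unfolding h_def Mk using m4
          by (simp add: numeral_eq_Suc)
        also have "k B - {1, M - 2} = B - {M}" unfolding kB using o a2' by auto
        finally show ?thesis using mB by auto
      qed
      ultimately show "h (k B) = B \<and> k B \<in> Q" by simp
    qed
  qed
  have "E (n-1) = P \<union> Q" "P \<inter> Q = {}" by (auto simp: P_def Q_def)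
  then have c1: "card (E (n-1)) = card P + card Q"
    using fin_E[of "n-1"] by (simp add: card_Un_disjoint)
  have "E n = special_partitions n \<union> (E1 \<union> E2)" unfolding spec_eq E1_def E2_def by auto
  moreover have "special_partitions n \<inter> (E1 \<union> E2) = {}" "E1 \<inter> E2 = {}"
    unfolding spec_eq E1_def E2_def by auto
  moreover have "finite E1" "finite E2" "finite (special_partitions n)"
    using fin_E[of n] unfolding spec_eq E1_def E2_def by auto
  ultimately have c2: "card (E n) = card (special_partitions n) + card E1 + card E2"
    by (simp add: card_Un_disjoint)
  show ?thesis using c1 c2 bij_betw_same_card[OF b1] bij_betw_same_card[OF b2] by simp
qed

theorem proposition1p3:
  fixes n :: nat
  assumes "n \<ge> 6"
  shows "s (int n) = int (card (special_partitions n))"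
proof -
  have qn: "q (int m) = int (card (SP m))" for m by (simp add: q_def)
  have e1: "int n - 1 = int (n-1)" "int n - 2 = int (n-2)" using assms by auto
  have "card (SP n) = card (SP (n-1)) + card (E n)" using assms by (intro step1) auto
  moreover have "card (SP (n-1)) = card (SP (n-1-1)) + card (E (n-1))" using assms by (intro step1) auto
  moreover have "n - 1 - 1 = n - 2" by simp
  moreover note step2[OF assms]
  ultimately show ?thesis unfolding s_def e1 qn by simp
qed

end
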